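(* Let $A_1,A_2\subseteq A$ be disjoint, and let $M$ and $N$ be tree-like models with roots $s$ and $t$ respectively. If $M,s\succeq_{(A_1,A_2)}N,t$, then there exist a tree-like model $N'$ with root $t'$ and a relation $\mathcal Z\subseteq S^M\times S^{N'}$ such that (1) $N,t\,\underline{\leftrightarrow}\,N',t'$; (2) $\mathcal Z$ is an $(A_1,A_2)$-refinement between $M$ and $N'$ with $s\mathcal Zt'$; and (3) $\mathcal Z$ is injective: for all $v\in S^{N'}$ and $w_1,w_2\in S^M$, if $w_1\mathcal Zv$ and $w_2\mathcal Zv$ then $w_1=w_2$.
   Context: Fix a finite set $A$ of actions and a countably infinite set $Atom$ of propositional letters. A model is $M=\langle S^M,R^M,V^M\rangle$ with $S^M\neq\emptyset$ a set of states, $R^M_b\subseteq S^M\times S^M$ for each $b\in A$, and $V^M:Atom\to 2^{S^M}$. $R^+_M$ denotes the transitive closure of $\bigcup_{b\in A}R^M_b$. Refinements: given $P\subseteq Atom$ and disjoint $A_1,A_2\subseteq A$, a relation $\mathcal Z\subseteq S^M\times S^{M'}$ is a $P$-restricted $(A_1,A_2)$-refinement between $M$ and $M'$ if for every pair $u\mathcal Z u'$: (atoms) $u\in V^M(r)$ iff $u'\in V^{M'}(r)$ for all $r\in Atom\setminus P$; (forth) for every $a\in A\setminus A_2$ and every $v$ with $uR^M_a v$ there is $v'$ with $u'R^{M'}_a v'$ and $v\mathcal Z v'$; (back) for every $a\in A\setminus A_1$ and every $v'$ with $u'R^{M'}_a v'$ there is $v$ with $uR^M_a v$ and $v\mathcal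 Z v'$. Write $M,u\succeq^P_{(A_1,A_2)}M',u'$ if such a $\mathcal Z$ exists with $u\mathcal Z u'$; the superscript is omitted when $P=\emptyset$. A bisimulation is an $\emptyset$-restricted $(\emptyset,\emptyset)$-refinement; $M,s\,\underline{\leftrightarrow}\,N,t$ means one exists linking $s$ and $t$. A model $M$ is tree-like if: (i) there is a unique state $s$ (the root) such that $sR^+_Mt$ for all $t\in S^M\setminus\{s\}$; (ii) for each $t\in S^M\setminus\{s\}$ there is a unique $t'\in S^M$ with $t'R^M_at$ for some $a\in A$; (iii) $R^M_a\cap R^M_b=\emptyset$ for all distinct $a,b\in A$; (iv) $\langle t,t\rangle\notin R^+_M$ for all $t\in S^M$. *)

theory Defs
  imports Main
begin

text \<open>Actions: the finite type 'act (the action set A is UNIV).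
  Propositional letters: nat (a countably infinite set Atom).\<close>

record ('s, 'act) model =
  St  :: "'s set"
  Rel :: "'act \<Rightarrow> ('s \<times> 's) set"
  Val :: "nat \<Rightarrow> 's set"

definition is_model :: "('s, 'act::finite) model \<Rightarrow> bool" where
  "is_model M \<longleftrightarrow> St M \<noteq> {} \<and> (\<forall>b. Rel M b \<subseteq> St M \<times> St M) \<and> (\<forall>p. Val M p \<subseteq> St M)"

definition Rplus :: "('s, 'act::finite) model \<Rightarrow> ('s \<times> 's) set" where
  "Rplus M = (\<Union>b. Rel M b)\<^sup>+"

definition is_root :: "('s, 'act::finite) model \<Rightarrow> 's \<Rightarrow> bool" where
  "is_root M s \<longleftrightarrow> s \<in> St M \<and> (\<forall>t \<in> St M - {s}. (s, t) \<in> Rplus M)"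

definition tree_like :: "('s, 'act::finite) model \<Rightarrow> bool" where
  "tree_like M \<longleftrightarrow>
     (\<exists>!s. is_root M s)
   \<and> (\<forall>t \<in> St M - {THE s. is_root M s}. \<exists>!t'. t' \<in> St M \<and> (\<exists>a. (t', t) \<in> Rel M a))
   \<and> (\<forall>a b. a \<noteq> b \<longrightarrow> Rel M a \<inter> Rel M b = {})
   \<and> (\<forall>t \<in> St M. (t, t) \<notin> Rplus M)"

definition refinement ::
  "nat set \<Rightarrow> 'act set \<Rightarrow> 'act set \<Rightarrow> ('s, 'act::finite) model \<Rightarrow> ('t, 'act) model
    \<Rightarrow> ('s \<times> 't) set \<Rightarrow> bool" where
  "refinement P A1 A2 M M' Z \<longleftrightarrow> Z \<subseteq> St M \<times> St M' \<and>
     (\<forall>u u'. (u, u') \<in> Z \<longrightarrow>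
        (\<forall>r. r \<notin> P \<longrightarrow> (u \<in> Val M r \<longleftrightarrow> u' \<in> Val M' r))
      \<and> (\<forall>a v. a \<notin> A2 \<longrightarrow> (u, v) \<in> Rel M a \<longrightarrow> (\<exists>v'. (u', v') \<in> Rel M' a \<and> (v, v') \<in> Z))
      \<and> (\<forall>a v'. a \<notin> A1 \<longrightarrow> (u', v') \<in> Rel M' a \<longrightarrow> (\<exists>v. (u, v) \<in> Rel M a \<and> (v, v') \<in> Z)))"

definition refines ::
  "nat set \<Rightarrow> 'act set \<Rightarrow> 'act set \<Rightarrow> ('s, 'act::finite) model \<Rightarrow> 's \<Rightarrow> ('t, 'act) model \<Rightarrow> 't \<Rightarrow> bool" where
  "refines P A1 A2 M u M' u' \<longleftrightarrow> (\<exists>Z. refinement P A1 A2 M M' Z \<and> (u, u') \<in> Z)"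

definition bisimilar :: "('s, 'act::finite) model \<Rightarrow> 's \<Rightarrow> ('t, 'act) model \<Rightarrow> 't \<Rightarrow> bool" where
  "bisimilar M s N t \<longleftrightarrow> refines {} {} {} M s N t"

end

theory Submission
  imports Defs
begin

definition okstep :: "('s, 'act::finite) model \<Rightarrow> ('t, 'act) model \<Rightarrow> ('s \<times> 't) set \<Rightarrow> 'act set
   \<Rightarrow> 'act \<Rightarrow> ('s option \<times> 't) \<Rightarrow> ('s option \<times> 't) \<Rightarrow> bool" where
  "okstep M N Z0 A1 a y x \<longleftrightarrow> (snd y, snd x) \<in> Rel N a \<and>
     (case fst x of None \<Rightarrow> (fst y = None \<or> a \<in> A1)
      | Some v \<Rightarrow> (\<exists>m. fst y = Some m \<and> (m, v) \<in> Rel M a \<and> (v, snd x) \<in> Z0))"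

inductive_set paths :: "('s, 'act::finite) model \<Rightarrow> ('t, 'act) model \<Rightarrow> ('s \<times> 't) set \<Rightarrow> 'act set
   \<Rightarrow> 's \<Rightarrow> 't \<Rightarrow> ('s option \<times> 't) list set"
  for M N Z0 A1 s t where
  root: "[(Some s, t)] \<in> paths M N Z0 A1 s t"
| step: "p \<in> paths M N Z0 A1 s t \<Longrightarrow> okstep M N Z0 A1 a (hd p) x \<Longrightarrow> x # p \<in> paths M N Z0 A1 s t"

definition NN :: "('s, 'act::finite) model \<Rightarrow> ('t, 'act) model \<Rightarrow> ('s \<times> 't) set \<Rightarrow> 'act set
   \<Rightarrow> 's \<Rightarrow> 't \<Rightarrow> (('s option \<times> 't) list, 'act) model" where
  "NN M N Z0 A1 s t = \<lparr> St = paths M N Z0 A1 s t,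
     Rel = (\<lambda>a. {(p, q). p \<in> paths M N Z0 A1 s t \<and> (\<exists>x. q = x # p \<and> okstep M N Z0 A1 a (hd p) x)}),
     Val = (\<lambda>r. {p \<in> paths M N Z0 A1 s t. snd (hd p) \<in> Val N r}) \<rparr>"

lemma paths_inv:
  assumes "p \<in> paths M N Z0 A1 s t" "is_model N" "Z0 \<subseteq> St M \<times> St N" "(s, t) \<in> Z0"
  shows "p \<noteq> [] \<and> snd (hd p) \<in> St N \<and> (\<forall>m. fst (hd p) = Some m \<longrightarrow> (m, snd (hd p)) \<in> Z0)"
  using assms(1)
proof induction
  case root then show ?case using assms by auto
next
  case (step p a x)
  then show ?case using assms(2) unfolding okstep_def is_model_def
    by (auto split: option.splits)
qed

lemma rplus_len:
  assumes "(p, q) \<in> Rplus (NN M N Z0 A1 s t)"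
  shows "length p < length q"
  using assms unfolding Rplus_def
proof induction
  case (base y) then show ?case by (auto simp: NN_def)
next
  case (step y z) then show ?case by (auto simp: NN_def)
qed

lemma reach_root:
  assumes "p \<in> paths M N Z0 A1 s t"
  shows "p = [(Some s, t)] \<or> ([(Some s, t)], p) \<in> Rplus (NN M N Z0 A1 s t)"
  using assms
proof induction
  case root then show ?case by simp
next
  case (step p a x)
  have e: "(p, x # p) \<in> (\<Union>b. Rel (NN M N Z0 A1 s t) b)"
  proof -
    have eq: "Rel (NN M N Z0 A1 s t) a = {(p, q). p \<in> paths M N Z0 A1 s t \<and> (\<exists>y. q = y # p \<and> okstep M N Z0 A1 a (hd p) y)}"
      unfolding NN_def by (simp only: model.select_convs)
    have "(p, x # p) \<in> Rel (NN M N Z0 A1 s t) a"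
      unfolding eq using step.hyps by blast
    then show ?thesis by blast
  qed
  show ?case
  proof (cases "p = [(Some s, t)]")
    case True then show ?thesis using e unfolding Rplus_def by auto
  next
    case False then have "([(Some s, t)], p) \<in> Rplus (NN M N Z0 A1 s t)" using step.IH by blast
    then show ?thesis using e unfolding Rplus_def by (blast intro: trancl_into_trancl)
  qed
qed

lemma paths_len: "p \<in> paths M N Z0 A1 s t \<Longrightarrow> length p \<ge> 1"
  by (induction rule: paths.induct) auto

theorem mainTheorem13:
  fixes M :: "('s, 'act::finite) model" and N :: "('t, 'act) model"
    and A1 A2 :: "'act set" and s :: 's and t :: 't
  assumes "A1 \<inter> A2 = {}"
    and "is_model M" and "tree_like M" and "is_root M s"
    and "is_model N" and "tree_like N" and "is_root N t"
    and "refines {} A1 A2 M s N t"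
  shows "\<exists>(N' :: (('s option \<times> 't) list, 'act) model) t' Z.
           is_model N' \<and> tree_like N' \<and> is_root N' t'
         \<and> bisimilar N t N' t'
         \<and> refinement {} A1 A2 M N' Z \<and> (s, t') \<in> Z
         \<and> (\<forall>v w1 w2. (w1, v) \<in> Z \<longrightarrow> (w2, v) \<in> Z \<longrightarrow> w1 = w2)"
proof -
  obtain Z0 where Z0: "refinement {} A1 A2 M N Z0" and st: "(s, t) \<in> Z0"
    using assms(8) unfolding refines_def by blast
  have Z0sub: "Z0 \<subseteq> St M \<times> St N" using Z0 unfolding refinement_def by blast
  define P where "P = paths M N Z0 A1 s t"
  define N' where "N' = NN M N Z0 A1 s t"
  define r0 :: "('s option \<times> 't) list" where "r0 = [(Some s, t)]"
  define Z where "Z = {(m, p). p \<in> P \<and> fst (hd p) = Some m}"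
  define B where "B = {(n, p). p \<in> P \<and> snd (hd p) = n}"
  have inv: "\<And>p. p \<in> P \<Longrightarrow> p \<noteq> [] \<and> snd (hd p) \<in> St N \<and> (\<forall>m. fst (hd p) = Some m \<longrightarrow> (m, snd (hd p)) \<in> Z0)"
    unfolding P_def using paths_inv[OF _ assms(5) Z0sub st] by blast
  have stN': "St N' = P" and relN': "\<And>a. Rel N' a = {(p, q). p \<in> P \<and> (\<exists>x. q = x # p \<and> okstep M N Z0 A1 a (hd p) x)}"
    and valN': "\<And>r. Val N' r = {p \<in> P. snd (hd p) \<in> Val N r}"
    unfolding N'_def NN_def P_def by auto
  have r0P: "r0 \<in> P" unfolding r0_def P_def by (rule paths.root)
  have stepP: "\<And>p a x. p \<in> P \<Longrightarrow> okstep M N Z0 A1 a (hd p) x \<Longrightarrow> x # p \<in> P"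
    unfolding P_def by (rule paths.step)
  have model: "is_model N'"
    unfolding is_model_def stN' relN' valN' using r0P stepP by auto
  have rootN': "is_root N' r0"
    unfolding is_root_def stN' using r0P reach_root[of _ M N Z0 A1 s t]
    unfolding P_def N'_def r0_def by auto
  have len: "\<And>p q. (p, q) \<in> Rplus N' \<Longrightarrow> length p < length q"
    unfolding N'_def by (rule rplus_len)
  have uniq: "\<And>r. is_root N' r \<Longrightarrow> r = r0"
  proof (rule ccontr)
    fix r assume r: "is_root N' r" "r \<noteq> r0"
    then have "(r, r0) \<in> Rplus N'" using r0P stN' unfolding is_root_def by auto
    then have "length r < length r0" by (rule len)
    moreover have "length r \<ge> 1" proof -
      have "r \<in> paths M N Z0 A1 s t" using r(1) unfolding is_root_def stN' P_def by blast
      then show ?thesis by (rule paths_len)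
    qed
    ultimately show False unfolding r0_def by simp
  qed
  have the0: "(THE s. is_root N' s) = r0" using uniq rootN' by blast
  have Ntree: "\<forall>a b. a \<noteq> b \<longrightarrow> Rel N a \<inter> Rel N b = {}" using assms(6) unfolding tree_like_def by blast
  have tree: "tree_like N'"
    unfolding tree_like_def
  proof (intro conjI)
    show "\<exists>!s. is_root N' s" using uniq rootN' by blast
    show "\<forall>q\<in>St N' - {THE s. is_root N' s}. \<exists>!t'. t' \<in> St N' \<and> (\<exists>a. (t', q) \<in> Rel N' a)"
    proof
      fix q assume q: "q \<in> St N' - {THE s. is_root N' s}"
      then have "q \<in> P" "q \<noteq> r0" using the0 stN' by auto
      then have "\<exists>p a x. q = x # p \<and> p \<in> P \<and> okstep M N Z0 A1 a (hd p) x"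
        unfolding P_def r0_def by (cases rule: paths.cases) auto
      then obtain p a x where "q = x # p" "p \<in> P" "okstep M N Z0 A1 a (hd p) x" by blast
      note h = this
      show "\<exists>!t'. t' \<in> St N' \<and> (\<exists>a. (t', q) \<in> Rel N' a)"
      proof (rule ex1I[of _ p])
        show "p \<in> St N' \<and> (\<exists>a. (p, q) \<in> Rel N' a)" unfolding stN' relN' using h by blast
      next
        fix y assume "y \<in> St N' \<and> (\<exists>a. (y, q) \<in> Rel N' a)"
        then obtain a where "(y, q) \<in> Rel N' a" by blast
        then show "y = p" unfolding relN' using h(1) by auto
      qed
    qed
    show "\<forall>a b. a \<noteq> b \<longrightarrow> Rel N' a \<inter> Rel N' b = {}"
      using Ntree unfolding relN' okstep_def by fastforce
    show "\<forall>q\<in>St N'. (q, q) \<notin> Rplus N'" using len by blast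
  qed
  have bis: "bisimilar N t N' r0"
    unfolding bisimilar_def refines_def
  proof (intro exI[of _ B] conjI)
    show "(t, r0) \<in> B" unfolding B_def r0_def using r0P r0_def by auto
    show "refinement {} {} {} N N' B"
      unfolding refinement_def
    proof (intro conjI allI impI)
      show "B \<subseteq> St N \<times> St N'" unfolding B_def stN' using inv by auto
    next
      fix u u' r assume "(u, u') \<in> B"
      then show "(u \<in> Val N r) = (u' \<in> Val N' r)" unfolding B_def valN' by auto
    next
      fix u u' a v assume uu: "(u, u') \<in> B" and uv: "(u, v) \<in> Rel N a"
      then have p: "u' \<in> P" "snd (hd u') = u" unfolding B_def by auto
      obtain y where y: "fst (hd u') = y" by blast
      have "\<exists>x. okstep M N Z0 A1 a (hd u') (x, v)"
      proof (cases y)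
        case None then show ?thesis using y p uv by (intro exI[of _ None]) (auto simp: okstep_def)
      next
        case (Some m)
        show ?thesis
        proof (cases "a \<in> A1")
          case True then show ?thesis using p uv by (intro exI[of _ None]) (auto simp: okstep_def)
        next
          case False
          have "(m, u) \<in> Z0" using inv p y Some by auto
          then obtain w where "(m, w) \<in> Rel M a" "(w, v) \<in> Z0"
            using Z0 False uv unfolding refinement_def by blast
          then show ?thesis using p uv y Some by (intro exI[of _ "Some w"]) (auto simp: okstep_def)
        qed
      qed
      then obtain x where x: "okstep M N Z0 A1 a (hd u') (x, v)" by blast
      show "\<exists>v'. (u', v') \<in> Rel N' a \<and> (v, v') \<in> B"
        using x p stepP[OF p(1) x] unfolding relN' B_def by (intro exI[of _ "(x, v) # u'"]) auto
    next
      fix u u' a v' assume uu: "(u, u') \<in> B" and uv: "(u', v') \<in> Rel N' a"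
      then show "\<exists>v. (u, v) \<in> Rel N a \<and> (v, v') \<in> B"
        unfolding B_def relN' using stepP by (auto simp: okstep_def)
    qed
  qed
  have ref: "refinement {} A1 A2 M N' Z"
    unfolding refinement_def
  proof (intro conjI allI impI)
    show "Z \<subseteq> St M \<times> St N'" unfolding Z_def stN' using inv Z0sub by fastforce
  next
    fix u u' r assume "(u, u') \<in> Z"
    then have "u' \<in> P" "(u, snd (hd u')) \<in> Z0" unfolding Z_def using inv by auto
    moreover have "(u \<in> Val M r) = (snd (hd u') \<in> Val N r)"
      using calculation Z0 unfolding refinement_def by blast
    ultimately show "(u \<in> Val M r) = (u' \<in> Val N' r)" unfolding valN' by auto
  next
    fix u u' a v assume uu: "(u, u') \<in> Z" and a: "a \<notin> A2" and uv: "(u, v) \<in> Rel M a"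
    then have p: "u' \<in> P" "fst (hd u') = Some u" "(u, snd (hd u')) \<in> Z0" unfolding Z_def using inv by auto
    then obtain w where w: "(snd (hd u'), w) \<in> Rel N a" "(v, w) \<in> Z0"
      using Z0 a uv unfolding refinement_def by blast
    have x: "okstep M N Z0 A1 a (hd u') (Some v, w)" using w p uv by (auto simp: okstep_def)
    show "\<exists>v'. (u', v') \<in> Rel N' a \<and> (v, v') \<in> Z"
      using x p stepP[OF p(1) x] unfolding relN' Z_def by (intro exI[of _ "(Some v, w) # u'"]) auto
  next
    fix u u' a v' assume uu: "(u, u') \<in> Z" and a: "a \<notin> A1" and uv: "(u', v') \<in> Rel N' a"
    then show "\<exists>v. (u, v) \<in> Rel M a \<and> (v, v') \<in> Z"
      unfolding Z_def relN' using stepP by (auto simp: okstep_def split: option.splits)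
  qed
  have sZ: "(s, r0) \<in> Z" unfolding Z_def using r0P r0_def by auto
  have inj: "\<forall>v w1 w2. (w1, v) \<in> Z \<longrightarrow> (w2, v) \<in> Z \<longrightarrow> w1 = w2" unfolding Z_def by auto
  show ?thesis using model tree rootN' bis ref sZ inj by blast
qed

end
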